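(* Let $\eta\colon K[x]\to\Gamma'\cup\{\infty\}$ be a valuation extending $v$, with respect to some order-preserving embedding $\iota\colon\Gamma\hookrightarrow\Gamma'$ of ordered abelian groups, and embed $\Gamma_{\mathbb Q}\hookrightarrow\Gamma'_{\mathbb Q}$ via $\iota\otimes\mathbb Q$. Then the following are equivalent: (1) $\eta(f)\le\mu(f)$ for all $f\in K[x]$ and all $\mu\in\mathbb V$; (2) $\eta(x)<\gamma$ for all $\gamma\in\Gamma_{\mathbb Q}$; (3) $\eta$ is equivalent to $\mu_{-\infty}$.
   Context: Let $(K,v)$ be a valued field with non-trivial value group $\Gamma=v(K^* )$, and let $\Gamma_{\mathbb Q}=\Gamma\otimes\mathbb Q$ with its induced order (similarly $\Gamma'_{\mathbb Q}=\Gamma'\otimes\mathbb Q$). Let $\mathbb V$ be the set of valuations $\mu\colon K[x]\to\Gamma_{\mathbb Q}\cup\{\infty\}$ whose restriction to $K$ is $v$. The valuation $\mu_{-\infty}\colon K[x]\to(\mathbb Z\times\Gamma)_{\mathrm{lex}}\cup\{\infty\}$ is $f\mapsto(-\deg f,\,v(\mathrm{lc}(f)))$, where $\mathrm{lc}(f)$ is the leading coefficient and $(\mathbb Z\times\Gamma)_{\mathrm{lex}}$ has the lexicographic order. Two valuations $\eta,\eta'$ on $K[x]$ are equivalent if there is an order-preserving group isomorphism $j$ between their value groups with $\eta=j\circ\eta'$ on $K[x]\setminus\{0\}$. *)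

theory Defs
  imports "HOL-Computational_Algebra.Polynomial" "HOL-Library.Product_Lexorder" "HOL-Library.Product_Plus"
begin

definition nsmul :: "nat \<Rightarrow> 'a::monoid_add \<Rightarrow> 'a" where
  "nsmul n a = (((+) a) ^^ n) 0"

text \<open>A valuation on the field K, given on K^* (v 0 = \<infinity> by convention).\<close>
definition field_valuation :: "('k::field \<Rightarrow> 'g::linordered_ab_group_add) \<Rightarrow> bool" where
  "field_valuation v \<longleftrightarrow>
     (\<forall>a b. a \<noteq> 0 \<longrightarrow> b \<noteq> 0 \<longrightarrow> v (a * b) = v a + v b) \<and>
     (\<forall>a b. a \<noteq> 0 \<longrightarrow> b \<noteq> 0 \<longrightarrow> a + b \<noteq> 0 \<longrightarrow> min (v a) (v b) \<le> v (a + b))"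

text \<open>A valuation on K[x], given on the nonzero polynomials (w 0 = \<infinity> by convention).\<close>
definition poly_valuation :: "('k::field poly \<Rightarrow> 'b::{linorder, plus}) \<Rightarrow> bool" where
  "poly_valuation w \<longleftrightarrow>
     (\<forall>f g. f \<noteq> 0 \<longrightarrow> g \<noteq> 0 \<longrightarrow> w (f * g) = w f + w g) \<and>
     (\<forall>f g. f \<noteq> 0 \<longrightarrow> g \<noteq> 0 \<longrightarrow> f + g \<noteq> 0 \<longrightarrow> min (w f) (w g) \<le> w (f + g))"

definition order_embedding :: "('a::linordered_ab_group_add \<Rightarrow> 'b::linordered_ab_group_add) \<Rightarrow> bool" where
  "order_embedding j \<longleftrightarrow> (\<forall>a b. j (a + b) = j a + j b) \<and> (\<forall>a b. a \<le> b \<longleftrightarrow> j a \<le> j b)"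

text \<open>j : G -> Q exhibits the ordered group Q as G \<otimes> \<rat> (divisible hull) with its induced order.\<close>
definition divisible_hull :: "('a::linordered_ab_group_add \<Rightarrow> 'q::linordered_ab_group_add) \<Rightarrow> bool" where
  "divisible_hull j \<longleftrightarrow> order_embedding j \<and>
     (\<forall>(q::'q) (n::nat). n > 0 \<longrightarrow> (\<exists>p. nsmul n p = q)) \<and>
     (\<forall>q. \<exists>n>0. \<exists>g. nsmul n q = j g)"

definition valsV :: "('k::field \<Rightarrow> 'g::linordered_ab_group_add) \<Rightarrow> ('g \<Rightarrow> 'q::linordered_ab_group_add)
     \<Rightarrow> ('k poly \<Rightarrow> 'q) set" where
  "valsV v jq = {\<mu>. poly_valuation \<mu> \<and> (\<forall>c. c \<noteq> 0 \<longrightarrow> \<mu> [:c:] = jq (v c))}"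

definition mu_minus_inf :: "('k::field \<Rightarrow> 'g) \<Rightarrow> 'k poly \<Rightarrow> int \<times> 'g" where
  "mu_minus_inf v f = (- int (degree f), v (lead_coeff f))"

definition val_group :: "('k::field poly \<Rightarrow> 'b::ab_group_add) \<Rightarrow> 'b set" where
  "val_group w = {w f - w g | f g. f \<noteq> 0 \<and> g \<noteq> 0}"

definition val_equiv :: "('k::field poly \<Rightarrow> 'b::{ab_group_add, linorder})
     \<Rightarrow> ('k poly \<Rightarrow> 'c::{ab_group_add, linorder}) \<Rightarrow> bool" where
  "val_equiv w w' \<longleftrightarrow> (\<exists>j. bij_betw j (val_group w') (val_group w) \<and>
     (\<forall>a\<in>val_group w'. \<forall>b\<in>val_group w'. j (a + b) = j a + j b \<and> (a \<le> b \<longleftrightarrow> j a \<le> j b)) \<and>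
     (\<forall>f. f \<noteq> 0 \<longrightarrow> w f = j (w' f)))"

end

theory Submission imports Defs begin

lemma nsmul_0[simp]: "nsmul 0 a = 0" by (simp add: nsmul_def)
lemma nsmul_Suc[simp]: "nsmul (Suc n) a = a + nsmul n a" by (simp add: nsmul_def)
lemma nsmul_add_nat: "nsmul (m+n) (a::'a::comm_monoid_add) = nsmul m a + nsmul n a"
  by (induct m) (simp_all add: add.assoc)
lemma nsmul_zero[simp]: "nsmul n (0::'a::monoid_add) = 0" by (induct n) simp_all
lemma nsmul_neg: "nsmul n (- a) = - nsmul n (a::'a::ab_group_add)"
  by (induct n) (simp_all add: algebra_simps)
lemma nsmul_distrib: "nsmul n (a + b) = nsmul n a + nsmul n (b::'a::comm_monoid_add)"
  by (induct n) (simp_all add: algebra_simps)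
lemma nsmul_diff: "nsmul n (a - b) = nsmul n a - nsmul n (b::'a::ab_group_add)"
  using nsmul_distrib[of n a "-b"] by (simp add: nsmul_neg)
lemma hom_zero: "(\<And>a b. f (a+b) = f a + f b) \<Longrightarrow> f (0::'a::group_add) = (0::'b::group_add)"
proof -
  assume h: "\<And>a b. f (a+b) = f a + f b"
  have "f 0 + f 0 = f 0 + 0" using h[of 0 0] by simp
  thus ?thesis by (rule add_left_imp_eq)
qed
lemma nsmul_hom: "(\<And>a b. f (a+b) = f a + f b) \<Longrightarrow> f (nsmul n (a::'a::group_add)) = nsmul n (f a::'b::group_add)"
  by (induct n) (simp_all add: hom_zero)
lemma nsmul_mono: "a \<le> b \<Longrightarrow> nsmul n a \<le> nsmul n (b::'a::ordered_ab_group_add)"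
  by (induct n) (simp_all add: add_mono)
lemma nsmul_strict_mono: "n > 0 \<Longrightarrow> a < b \<Longrightarrow> nsmul n a < nsmul n (b::'a::ordered_ab_group_add)"
proof (induct n)
  case (Suc n) thus ?case
    by (cases n) (auto intro: add_less_le_mono nsmul_mono)
qed simp
lemma nsmul_less_cancel: "n > 0 \<Longrightarrow> nsmul n a < nsmul n b \<Longrightarrow> a < (b::'a::linordered_ab_group_add)"
  using nsmul_mono[of b a n] by (auto simp: not_less[symmetric])

lemma oe_add: "order_embedding j \<Longrightarrow> j (a + b) = j a + j b" by (simp add: order_embedding_def)
lemma oe_le: "order_embedding j \<Longrightarrow> j a \<le> j b \<longleftrightarrow> a \<le> b" by (simp add: order_embedding_def)
lemma oe_less: "order_embedding j \<Longrightarrow> j a < j b \<longleftrightarrow> a < b" by (metis oe_le not_le)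
lemma oe_0: "order_embedding j \<Longrightarrow> j 0 = 0" by (rule hom_zero) (simp add: oe_add)
lemma oe_inj: "order_embedding j \<Longrightarrow> j a = j b \<longleftrightarrow> a = b" by (simp add: eq_iff oe_le)
lemma oe_neg: "order_embedding j \<Longrightarrow> j (- a) = - j a"
proof -
  assume h: "order_embedding j"
  have "j (- a) + j a = 0" using oe_add[OF h, of "-a" a] oe_0[OF h] by simp
  thus ?thesis by (simp add: add_eq_0_iff2)
qed
lemma oe_diff: assumes "order_embedding j" shows "j (a - b) = j a - j b"
proof -
  have "j a = j (a - b) + j b" using oe_add[OF assms, of "a-b" b] by simp
  thus ?thesis by simp
qed
lemma oe_nsmul: "order_embedding j \<Longrightarrow> j (nsmul n a) = nsmul n (j a)"
  by (rule nsmul_hom) (simp add: oe_add)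
lemma oe_min: "order_embedding j \<Longrightarrow> j (min a b) = min (j a) (j b)"
  by (simp add: min_def oe_le)

definition gval :: "('a::idom \<Rightarrow> 'b::linordered_ab_group_add) \<Rightarrow> bool" where
  "gval w \<longleftrightarrow> (\<forall>a b. a \<noteq> 0 \<longrightarrow> b \<noteq> 0 \<longrightarrow> w (a * b) = w a + w b) \<and>
     (\<forall>a b. a \<noteq> 0 \<longrightarrow> b \<noteq> 0 \<longrightarrow> a + b \<noteq> 0 \<longrightarrow> min (w a) (w b) \<le> w (a + b))"

lemma gval_field: "field_valuation v \<Longrightarrow> gval v" by (simp add: field_valuation_def gval_def)
lemma gval_poly: "poly_valuation (w::'k::field poly \<Rightarrow> 'b::linordered_ab_group_add) \<longleftrightarrow> gval w"
  by (simp add: poly_valuation_def gval_def)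
lemma gval_mult: "gval w \<Longrightarrow> a \<noteq> 0 \<Longrightarrow> b \<noteq> 0 \<Longrightarrow> w (a * b) = w a + w b" by (simp add: gval_def)
lemma gval_add: "gval w \<Longrightarrow> a \<noteq> 0 \<Longrightarrow> b \<noteq> 0 \<Longrightarrow> a + b \<noteq> 0 \<Longrightarrow> min (w a) (w b) \<le> w (a + b)"
  by (simp add: gval_def)
lemma gval_one: "gval w \<Longrightarrow> w 1 = 0"
  using gval_mult[of w 1 1] by simp
lemma gval_neg: assumes "gval w" "a \<noteq> 0" shows "w (- a) = w a"
proof -
  have "w (-1) + w (-1) = 0" using gval_mult[OF assms(1), of "-1" "-1"] gval_one[OF assms(1)] by simp
  hence "w (-1) = 0" using add_neg_neg[of "w (-1)" "w (-1)"] add_pos_pos[of "w (-1)" "w (-1)"]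
    by (cases "w (-1)" "0::'b" rule: linorder_cases) auto
  thus ?thesis using gval_mult[OF assms(1), of "-1" a] assms(2) by simp
qed
lemma gval_power: "gval w \<Longrightarrow> a \<noteq> 0 \<Longrightarrow> w (a ^ n) = nsmul n (w a)"
  by (induct n) (simp_all add: gval_one gval_mult)

lemma gval_strict: assumes w: "gval w" and a: "a \<noteq> 0" and b: "b \<noteq> 0" and lt: "w a < w b"
  shows "a + b \<noteq> 0 \<and> w (a + b) = w a"
proof -
  have ab: "a + b \<noteq> 0"
  proof
    assume "a + b = 0" hence "a = - b" by (simp add: eq_neg_iff_add_eq_0)
    hence "w a = w b" using gval_neg[OF w b] by simp
    thus False using lt by simp
  qed
  have 1: "min (w a) (w b) \<le> w (a+b)" by (rule gval_add[OF w a b ab])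
  have 2: "min (w (a+b)) (w (-b)) \<le> w (a + b + - b)"
    by (rule gval_add[OF w ab]) (use a b in auto)
  have "w (-b) = w b" by (rule gval_neg[OF w b])
  with 1 2 lt have "w (a+b) = w a" by (simp add: min_def split: if_splits)
  with ab show ?thesis by simp
qed

lemma gval_sum:
  assumes w: "gval w" and fin: "finite S" and up: "\<And>x y. P x \<Longrightarrow> x \<le> y \<Longrightarrow> P y"
    and terms: "\<And>i. i \<in> S \<Longrightarrow> a i \<noteq> 0 \<Longrightarrow> P (w (a i))"
    and nz: "sum a S \<noteq> 0"
  shows "P (w (sum a S))"
  using fin terms nz
proof (induct S rule: finite_induct)
  case empty thus ?case by simp
next
  case (insert x F)
  have s: "sum a (insert x F) = a x + sum a F" using insert by simp
  show ?case
  proof (cases "a x = 0")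
    case True thus ?thesis using insert by simp
  next
    case ax: False
    show ?thesis
    proof (cases "sum a F = 0")
      case True thus ?thesis using insert ax by simp
    next
      case False
      have "min (w (a x)) (w (sum a F)) \<le> w (a x + sum a F)"
        using gval_add[OF w ax False] insert.prems s by simp
      moreover have "P (w (a x))" "P (w (sum a F))" using insert ax False by auto
      ultimately show ?thesis using s up by (metis min_def)
    qed
  qed
qed

lemma gval_sum_strict:
  assumes w: "gval w" and fin: "finite S" and a0: "a0 \<noteq> 0"
    and terms: "\<And>i. i \<in> S \<Longrightarrow> a i \<noteq> 0 \<Longrightarrow> w a0 < w (a i)"
  shows "a0 + sum a S \<noteq> 0 \<and> w (a0 + sum a S) = w a0"
proof (cases "sum a S = 0")
  case True thus ?thesis using a0 by simp
next
  case False
  have "w a0 < w (sum a S)"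
    by (rule gval_sum[OF w fin, where P="\<lambda>x. w a0 < x"]) (use terms False in auto)
  thus ?thesis using gval_strict[OF w a0 False] by simp
qed

lemma gval_comp: "gval v \<Longrightarrow> order_embedding j \<Longrightarrow> gval (\<lambda>x. j (v x))"
  by (simp add: gval_def oe_add oe_min[symmetric] oe_le)


definition tv :: "('k::field \<Rightarrow> 'q::linordered_ab_group_add) \<Rightarrow> 'q \<Rightarrow> 'k poly \<Rightarrow> nat \<Rightarrow> 'q" where
  "tv w \<delta> f i = w (coeff f i) + nsmul i \<delta>"
definition gauss :: "('k::field \<Rightarrow> 'q::linordered_ab_group_add) \<Rightarrow> 'q \<Rightarrow> 'k poly \<Rightarrow> 'q" where
  "gauss w \<delta> f = Min (tv w \<delta> f ` {i. coeff f i \<noteq> 0})"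

lemma supp_fin: "finite {i. coeff f i \<noteq> 0}"
  by (rule finite_subset[of _ "{..degree f}"]) (auto intro: le_degree)
lemma supp_ne: "f \<noteq> 0 \<Longrightarrow> {i. coeff f i \<noteq> 0} \<noteq> {}"
  by (metis (mono_tags) empty_Collect_eq leading_coeff_0_iff)

lemma gauss_le: "coeff f i \<noteq> 0 \<Longrightarrow> gauss w \<delta> f \<le> tv w \<delta> f i"
  unfolding gauss_def by (rule Min_le) (use supp_fin in auto)
lemma gauss_attained: "f \<noteq> 0 \<Longrightarrow> \<exists>i. coeff f i \<noteq> 0 \<and> gauss w \<delta> f = tv w \<delta> f i"
proof -
  assume "f \<noteq> 0"
  hence "gauss w \<delta> f \<in> tv w \<delta> f ` {i. coeff f i \<noteq> 0}"
    unfolding gauss_def by (intro Min_in) (use supp_fin supp_ne in auto)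
  thus ?thesis by auto
qed
lemma gauss_ge: "f \<noteq> 0 \<Longrightarrow> (\<And>i. coeff f i \<noteq> 0 \<Longrightarrow> m \<le> tv w \<delta> f i) \<Longrightarrow> m \<le> gauss w \<delta> f"
  using gauss_attained by metis

lemma gauss_mult:
  assumes w: "gval w" and f: "f \<noteq> 0" and g: "g \<noteq> 0"
  shows "gauss w \<delta> (f*g) = gauss w \<delta> f + gauss w \<delta> g"
proof -
  let ?F = "gauss w \<delta> f" and ?G = "gauss w \<delta> g"
  have fg: "f*g \<noteq> 0" using f g by simp
  have ge: "?F + ?G \<le> tv w \<delta> (f*g) k" if nz: "coeff (f*g) k \<noteq> 0" for k
  proof -
    have "?F + ?G \<le> w (\<Sum>i\<le>k. coeff f i * coeff g (k-i)) + nsmul k \<delta>"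
    proof (rule gval_sum[OF w, where P="\<lambda>x. ?F + ?G \<le> x + nsmul k \<delta>"])
      show "finite {..k}" by simp
      show "(\<Sum>i\<le>k. coeff f i * coeff g (k-i)) \<noteq> 0" using nz by (simp add: coeff_mult)
      show "\<And>x y. ?F+?G \<le> x + nsmul k \<delta> \<Longrightarrow> x \<le> y \<Longrightarrow> ?F+?G \<le> y + nsmul k \<delta>"
        by (meson add_right_mono order_trans)
      fix i assume i: "i \<in> {..k}" "coeff f i * coeff g (k-i) \<noteq> 0"
      then have ai: "coeff f i \<noteq> 0" and bi: "coeff g (k-i) \<noteq> 0" and ik: "i \<le> k" by auto
      have kk: "nsmul k \<delta> = nsmul i \<delta> + nsmul (k-i) \<delta>"
        using ik nsmul_add_nat[of i "k-i" \<delta>] by simp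
      have "w (coeff f i * coeff g (k-i)) + nsmul k \<delta> = tv w \<delta> f i + tv w \<delta> g (k-i)"
        by (simp add: gval_mult[OF w ai bi] tv_def kk algebra_simps)
      moreover have "?F \<le> tv w \<delta> f i" "?G \<le> tv w \<delta> g (k-i)" using ai bi by (auto intro: gauss_le)
      ultimately show "?F + ?G \<le> w (coeff f i * coeff g (k-i)) + nsmul k \<delta>"
        by (metis add_mono)
    qed
    thus ?thesis by (simp add: tv_def coeff_mult)
  qed
  have lower: "?F + ?G \<le> gauss w \<delta> (f*g)" by (rule gauss_ge[OF fg ge])
  define i0 where "i0 = (LEAST i. coeff f i \<noteq> 0 \<and> tv w \<delta> f i = ?F)"
  define j0 where "j0 = (LEAST i. coeff g i \<noteq> 0 \<and> tv w \<delta> g i = ?G)"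
  have i0: "coeff f i0 \<noteq> 0 \<and> tv w \<delta> f i0 = ?F"
    unfolding i0_def by (rule LeastI_ex) (use gauss_attained[OF f] in metis)
  have j0: "coeff g j0 \<noteq> 0 \<and> tv w \<delta> g j0 = ?G"
    unfolding j0_def by (rule LeastI_ex) (use gauss_attained[OF g] in metis)
  have i0min: "?F < tv w \<delta> f i" if "i < i0" "coeff f i \<noteq> 0" for i
  proof -
    have "\<not> (coeff f i \<noteq> 0 \<and> tv w \<delta> f i = ?F)" using not_less_Least[OF that(1)[unfolded i0_def]] .
    thus ?thesis using gauss_le[OF that(2), of w \<delta>] that(2) by auto
  qed
  have j0min: "?G < tv w \<delta> g i" if "i < j0" "coeff g i \<noteq> 0" for i
  proof -
    have "\<not> (coeff g i \<noteq> 0 \<and> tv w \<delta> g i = ?G)" using not_less_Least[OF that(1)[unfolded j0_def]] .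
    thus ?thesis using gauss_le[OF that(2), of w \<delta>] that(2) by auto
  qed
  define k0 where "k0 = i0 + j0"
  define t where "t = (\<lambda>i. coeff f i * coeff g (k0 - i))"
  have a0: "t i0 \<noteq> 0" using i0 j0 by (simp add: t_def k0_def)
  have wa0: "w (t i0) + nsmul k0 \<delta> = ?F + ?G"
    using i0 j0 by (simp add: t_def k0_def tv_def gval_mult[OF w] nsmul_add_nat algebra_simps)
  have c: "coeff (f*g) k0 = t i0 + sum t ({..k0} - {i0})"
    unfolding coeff_mult t_def by (rule sum.remove) (auto simp: k0_def)
  have strict: "t i0 + sum t ({..k0} - {i0}) \<noteq> 0 \<and> w (t i0 + sum t ({..k0} - {i0})) = w (t i0)"
  proof (rule gval_sum_strict[OF w _ a0])
    show "finite ({..k0} - {i0})" by simp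
    fix i assume i: "i \<in> {..k0} - {i0}" "t i \<noteq> 0"
    then have ai: "coeff f i \<noteq> 0" and bi: "coeff g (k0-i) \<noteq> 0" and ik: "i \<le> k0" and ne: "i \<noteq> i0"
      by (auto simp: t_def)
    have kk: "nsmul k0 \<delta> = nsmul i \<delta> + nsmul (k0-i) \<delta>"
      using ik nsmul_add_nat[of i "k0-i" \<delta>] by simp
    have e: "w (t i) + nsmul k0 \<delta> = tv w \<delta> f i + tv w \<delta> g (k0-i)"
      by (simp add: t_def gval_mult[OF w ai bi] tv_def kk algebra_simps)
    have "?F + ?G < tv w \<delta> f i + tv w \<delta> g (k0-i)"
    proof (cases "i < i0")
      case True
      show ?thesis using add_less_le_mono[OF i0min[OF True ai] gauss_le[OF bi, of w \<delta>]] .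
    next
      case False
      hence "k0 - i < j0" using ne ik k0_def by auto
      thus ?thesis using j0min[OF _ bi] gauss_le[OF ai, of w \<delta>] by (metis add_le_less_mono)
    qed
    hence "w (t i0) + nsmul k0 \<delta> < w (t i) + nsmul k0 \<delta>" using wa0 e by simp
    thus "w (t i0) < w (t i)" by simp
  qed
  have "gauss w \<delta> (f*g) \<le> tv w \<delta> (f*g) k0"
    by (rule gauss_le) (use c strict in simp)
  also have "\<dots> = ?F + ?G" using c strict wa0 by (simp add: tv_def)
  finally show ?thesis using lower by simp
qed

lemma gauss_add:
  assumes w: "gval w" and f: "f \<noteq> 0" and g: "g \<noteq> 0" and fg: "f + g \<noteq> 0"
  shows "min (gauss w \<delta> f) (gauss w \<delta> g) \<le> gauss w \<delta> (f + g)"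
proof -
  obtain k where k: "coeff (f+g) k \<noteq> 0" "gauss w \<delta> (f+g) = tv w \<delta> (f+g) k"
    using gauss_attained[OF fg] by blast
  have "min (gauss w \<delta> f) (gauss w \<delta> g) \<le> tv w \<delta> (f+g) k"
  proof (cases "coeff f k = 0")
    case True thus ?thesis using k gauss_le[of g k w \<delta>] by (simp add: tv_def min.coboundedI2)
  next
    case fk: False
    show ?thesis
    proof (cases "coeff g k = 0")
      case True thus ?thesis using k gauss_le[of f k w \<delta>] by (simp add: tv_def min.coboundedI1)
    next
      case gk: False
      have "min (w (coeff f k)) (w (coeff g k)) \<le> w (coeff f k + coeff g k)"
        using gval_add[OF w fk gk] k by simp
      hence "min (tv w \<delta> f k) (tv w \<delta> g k) \<le> tv w \<delta> (f+g) k"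
        by (auto simp: tv_def min_def split: if_splits)
      moreover have "gauss w \<delta> f \<le> tv w \<delta> f k" "gauss w \<delta> g \<le> tv w \<delta> g k"
        using fk gk by (auto intro: gauss_le)
      ultimately show ?thesis by (meson min.mono order_trans)
    qed
  qed
  thus ?thesis using k by simp
qed

lemma gauss_gval: "gval w \<Longrightarrow> gval (gauss w \<delta>)"
  unfolding gval_def[of "gauss w \<delta>"] using gauss_mult gauss_add by blast

lemma gauss_const: "gval w \<Longrightarrow> c \<noteq> 0 \<Longrightarrow> gauss w \<delta> [:c:] = w c"
proof -
  assume "c \<noteq> 0"
  hence "{i. coeff [:c:] i \<noteq> 0} = {0}" by (auto simp: coeff_pCons split: nat.splits) (metis not0_implies_Suc)
  thus ?thesis by (simp add: gauss_def tv_def)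
qed
lemma gauss_X: "gval w \<Longrightarrow> gauss w \<delta> [:0,1:] = \<delta>"
proof -
  assume w: "gval w"
  have "coeff [:0,1::'a:] i \<noteq> 0 \<longleftrightarrow> i = 1" for i
    by (cases i; cases "i - 1") (auto simp: coeff_pCons)
  hence "{i. coeff [:0,1::'a:] i \<noteq> 0} = {1}" by auto
  thus ?thesis by (simp add: gauss_def tv_def gval_one[OF w])
qed


locale mset =
  fixes v :: "'k::field \<Rightarrow> 'g::linordered_ab_group_add"
    and \<iota> :: "'g \<Rightarrow> 'h::linordered_ab_group_add"
    and jq :: "'g \<Rightarrow> 'q::linordered_ab_group_add"
    and jr :: "'h \<Rightarrow> 'r::linordered_ab_group_add"
    and \<iota>Q :: "'q \<Rightarrow> 'r"
    and \<eta> :: "'k poly \<Rightarrow> 'h"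
  assumes v_val: "field_valuation v"
    and v_onto: "\<forall>g. \<exists>a. a \<noteq> 0 \<and> v a = g"
    and v_nontriv: "\<exists>a. a \<noteq> 0 \<and> v a \<noteq> 0"
    and \<iota>_emb: "order_embedding \<iota>"
    and jq_hull: "divisible_hull jq"
    and jr_hull: "divisible_hull jr"
    and \<iota>Q_hom: "\<forall>a b. \<iota>Q (a + b) = \<iota>Q a + \<iota>Q b"
    and \<iota>Q_ext: "\<forall>g. \<iota>Q (jq g) = jr (\<iota> g)"
    and \<eta>_val: "poly_valuation \<eta>"
    and \<eta>_ext: "\<forall>c. c \<noteq> 0 \<longrightarrow> \<eta> [:c:] = \<iota> (v c)"
begin

abbreviation "eX \<equiv> \<eta> [:0,1:]"

lemma vg: "gval v" using v_val by (rule gval_field)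
lemma \<eta>g: "gval \<eta>" using \<eta>_val by (simp add: gval_poly)
lemma jq_oe: "order_embedding jq" using jq_hull by (simp add: divisible_hull_def)
lemma jr_oe: "order_embedding jr" using jr_hull by (simp add: divisible_hull_def)
lemma \<iota>Q_add: "\<iota>Q (a+b) = \<iota>Q a + \<iota>Q b" using \<iota>Q_hom by simp
lemma \<iota>Q_nsmul: "\<iota>Q (nsmul n a) = nsmul n (\<iota>Q a)" by (rule nsmul_hom) (rule \<iota>Q_add)
lemma \<iota>Q_pos: assumes "0 < q" shows "0 < \<iota>Q q"
proof -
  obtain n g where n: "n > 0" "nsmul n q = jq g" using jq_hull unfolding divisible_hull_def by blast
  have "nsmul n 0 < nsmul n q" by (rule nsmul_strict_mono[OF n(1) assms])
  hence "jq 0 < jq g" using n(2) oe_0[OF jq_oe] by simp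
  hence "0 < g" by (simp add: oe_less[OF jq_oe])
  hence "jr (\<iota> 0) < jr (\<iota> g)" by (simp add: oe_less[OF jr_oe] oe_less[OF \<iota>_emb])
  moreover have "jr (\<iota> 0) = 0" by (simp add: oe_0[OF \<iota>_emb] oe_0[OF jr_oe])
  moreover have "jr (\<iota> g) = nsmul n (\<iota>Q q)"
  proof -
    have "jr (\<iota> g) = \<iota>Q (jq g)" by (simp add: \<iota>Q_ext)
    also have "\<dots> = \<iota>Q (nsmul n q)" using n(2) by simp
    also have "\<dots> = nsmul n (\<iota>Q q)" by (rule \<iota>Q_nsmul)
    finally show ?thesis .
  qed
  ultimately have "nsmul n 0 < nsmul n (\<iota>Q q)" by simp
  thus ?thesis by (rule nsmul_less_cancel[OF n(1)])
qed
lemma \<iota>Q_less: "a < b \<Longrightarrow> \<iota>Q a < \<iota>Q b"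
proof -
  assume "a < b" hence "0 < \<iota>Q (b - a)" by (intro \<iota>Q_pos) simp
  moreover have "\<iota>Q b = \<iota>Q a + \<iota>Q (b - a)" using \<iota>Q_add[of a "b-a"] by simp
  ultimately show ?thesis by simp
qed
lemma \<iota>Q_le: "a \<le> b \<Longrightarrow> \<iota>Q a \<le> \<iota>Q b"
  using \<iota>Q_less by (cases "a = b") (auto simp: le_less)
lemma \<iota>Q_min: "\<iota>Q (min a b) = min (\<iota>Q a) (\<iota>Q b)"
  using \<iota>Q_le[of a b] \<iota>Q_less[of b a] by (auto simp: min_def not_le)

lemma S2_iff_K: "(\<forall>\<gamma>. jr eX < \<iota>Q \<gamma>) \<longleftrightarrow> (\<forall>k>0. \<forall>h. nsmul k eX < \<iota> h)"
proof
  assume S2: "\<forall>\<gamma>. jr eX < \<iota>Q \<gamma>"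
  show "\<forall>k>0. \<forall>h. nsmul k eX < \<iota> h"
  proof (intro allI impI)
    fix k :: nat and h assume k: "k > 0"
    obtain q where q: "nsmul k q = jq h" using jq_hull k unfolding divisible_hull_def by blast
    have "jr (nsmul k eX) = nsmul k (jr eX)" by (rule oe_nsmul[OF jr_oe])
    also have "\<dots> < nsmul k (\<iota>Q q)" using S2 k by (simp add: nsmul_strict_mono)
    also have "\<dots> = \<iota>Q (jq h)" using q \<iota>Q_nsmul by metis
    also have "\<dots> = jr (\<iota> h)" by (simp add: \<iota>Q_ext)
    finally show "nsmul k eX < \<iota> h" by (simp add: oe_less[OF jr_oe])
  qed
next
  assume K: "\<forall>k>0. \<forall>h. nsmul k eX < \<iota> h"
  show "\<forall>\<gamma>. jr eX < \<iota>Q \<gamma>"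
  proof
    fix \<gamma>
    obtain n g where n: "n > 0" "nsmul n \<gamma> = jq g" using jq_hull unfolding divisible_hull_def by blast
    have "nsmul n (jr eX) = jr (nsmul n eX)" by (rule oe_nsmul[OF jr_oe, symmetric])
    also have "\<dots> < jr (\<iota> g)" using K n(1) by (simp add: oe_less[OF jr_oe])
    also have "\<dots> = \<iota>Q (jq g)" by (simp add: \<iota>Q_ext)
    also have "\<dots> = nsmul n (\<iota>Q \<gamma>)" using n(2) \<iota>Q_nsmul by metis
    finally show "jr eX < \<iota>Q \<gamma>" by (rule nsmul_less_cancel[OF n(1)])
  qed
qed

lemma pCons_X: "pCons (a::'k) p = [:0,1:] * p + [:a:]" by simp

lemma eta_formula:
  assumes K: "\<forall>k>0. \<forall>h. nsmul k eX < \<iota> h"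
  shows "f \<noteq> 0 \<Longrightarrow> \<eta> f = \<iota> (v (lead_coeff f)) + nsmul (degree f) eX"
proof (induct f rule: pCons_induct)
  case 0 thus ?case by simp
next
  case (pCons a p)
  show ?case
  proof (cases "p = 0")
    case True
    hence a: "a \<noteq> 0" using pCons.prems by simp
    thus ?thesis using True \<eta>_ext by simp
  next
    case p: False
    have IH: "\<eta> p = \<iota> (v (lead_coeff p)) + nsmul (degree p) eX" using pCons.hyps(2) p by simp
    have deg: "degree (pCons a p) = Suc (degree p)" using p by simp
    have lc: "lead_coeff (pCons a p) = lead_coeff p" using p by simp
    have Xp: "\<eta> ([:0,1:] * p) = \<iota> (v (lead_coeff p)) + nsmul (Suc (degree p)) eX"
      using gval_mult[OF \<eta>g, of "[:0,1:]" p] p IH by (simp add: algebra_simps)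
    show ?thesis
    proof (cases "a = 0")
      case True
      hence "pCons a p = [:0,1:] * p" by simp
      thus ?thesis using Xp deg lc by simp
    next
      case a: False
      have "nsmul (Suc (degree p)) eX < \<iota> (v a - v (lead_coeff p))"
        using K[rule_format, of "Suc (degree p)" "v a - v (lead_coeff p)"] by (simp del: nsmul_Suc)
      hence "nsmul (Suc (degree p)) eX < \<iota> (v a) - \<iota> (v (lead_coeff p))"
        by (simp only: oe_diff[OF \<iota>_emb])
      hence "nsmul (Suc (degree p)) eX + \<iota> (v (lead_coeff p)) < \<iota> (v a)"
        by (simp only: less_diff_eq)
      hence "\<iota> (v (lead_coeff p)) + nsmul (Suc (degree p)) eX < \<iota> (v a)"
        by (metis add.commute)
      hence lt: "\<eta> ([:0,1:] * p) < \<eta> [:a:]" using Xp \<eta>_ext a by (simp del: nsmul_Suc)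
      have "\<eta> ([:0,1:] * p + [:a:]) = \<eta> ([:0,1:] * p)"
        using gval_strict[OF \<eta>g _ _ lt] p a by simp
      hence e1: "\<eta> (pCons a p) = \<eta> ([:0,1:] * p)" unfolding pCons_X[of a p] .
      show ?thesis using e1 Xp deg lc by (simp del: nsmul_Suc)
    qed
  qed
qed

lemma mu_bound:
  assumes \<mu>: "\<mu> \<in> valsV v jq" and S2: "\<forall>\<gamma>. jr eX < \<iota>Q \<gamma>" and K: "\<forall>k>0. \<forall>h. nsmul k eX < \<iota> h"
  shows "f \<noteq> 0 \<Longrightarrow> jr (\<iota> (v (lead_coeff f)) + nsmul (degree f) eX) \<le> \<iota>Q (\<mu> f)"
proof (induct f rule: pCons_induct)
  case 0 thus ?case by simp
next
  case (pCons a p)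
  have \<mu>g: "gval \<mu>" and \<mu>ext: "\<And>c. c \<noteq> 0 \<Longrightarrow> \<mu> [:c:] = jq (v c)"
    using \<mu> by (auto simp: valsV_def gval_poly)
  show ?case
  proof (cases "p = 0")
    case True
    hence a: "a \<noteq> 0" using pCons.prems by simp
    thus ?thesis using True \<mu>ext[OF a] \<iota>Q_ext by simp
  next
    case p: False
    have IH: "jr (\<iota> (v (lead_coeff p)) + nsmul (degree p) eX) \<le> \<iota>Q (\<mu> p)" using pCons.hyps(2) p by simp
    have deg: "degree (pCons a p) = Suc (degree p)" using p by simp
    have lc: "lead_coeff (pCons a p) = lead_coeff p" using p by simp
    let ?E = "\<iota> (v (lead_coeff p)) + nsmul (Suc (degree p)) eX"
    have b1: "jr ?E \<le> \<iota>Q (\<mu> ([:0,1:] * p))"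
    proof -
      have "jr ?E = jr eX + jr (\<iota> (v (lead_coeff p)) + nsmul (degree p) eX)"
        by (simp add: oe_add[OF jr_oe, symmetric] algebra_simps)
      also have "\<dots> \<le> \<iota>Q (\<mu> [:0,1:]) + \<iota>Q (\<mu> p)"
        using S2 IH by (meson add_mono less_imp_le)
      also have "\<dots> = \<iota>Q (\<mu> ([:0,1:] * p))" using gval_mult[OF \<mu>g, of "[:0,1:]" p] p \<iota>Q_add by simp
      finally show ?thesis .
    qed
    show ?thesis
    proof (cases "a = 0")
      case True
      hence "pCons a p = [:0,1:] * p" by simp
      thus ?thesis using b1 deg lc by simp
    next
      case a: False
      have "nsmul (Suc (degree p)) eX < \<iota> (v a - v (lead_coeff p))"
        using K[rule_format, of "Suc (degree p)" "v a - v (lead_coeff p)"] by (simp del: nsmul_Suc)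
      hence "nsmul (Suc (degree p)) eX < \<iota> (v a) - \<iota> (v (lead_coeff p))"
        by (simp only: oe_diff[OF \<iota>_emb])
      hence "nsmul (Suc (degree p)) eX + \<iota> (v (lead_coeff p)) < \<iota> (v a)"
        by (simp only: less_diff_eq)
      hence "?E < \<iota> (v a)"
        by (metis add.commute)
      hence "jr ?E \<le> jr (\<iota> (v a))" by (simp add: oe_le[OF jr_oe])
      also have "\<dots> = \<iota>Q (\<mu> [:a:])" using \<mu>ext[OF a] \<iota>Q_ext by simp
      finally have b2: "jr ?E \<le> \<iota>Q (\<mu> [:a:])" .
      have nz: "[:0,1:] * p + [:a:] \<noteq> 0" using pCons.prems unfolding pCons_X[of a p] .
      have "min (\<mu> ([:0,1:] * p)) (\<mu> [:a:]) \<le> \<mu> ([:0,1:] * p + [:a:])"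
        by (rule gval_add[OF \<mu>g _ _ nz]) (use p a in auto)
      hence "min (\<mu> ([:0,1:] * p)) (\<mu> [:a:]) \<le> \<mu> (pCons a p)"
        unfolding pCons_X[of a p] .
      hence "\<iota>Q (min (\<mu> ([:0,1:] * p)) (\<mu> [:a:])) \<le> \<iota>Q (\<mu> (pCons a p))"
        by (rule \<iota>Q_le)
      hence "min (\<iota>Q (\<mu> ([:0,1:] * p))) (\<iota>Q (\<mu> [:a:])) \<le> \<iota>Q (\<mu> (pCons a p))" by (simp add: \<iota>Q_min)
      moreover have "jr ?E \<le> min (\<iota>Q (\<mu> ([:0,1:] * p))) (\<iota>Q (\<mu> [:a:]))" using b1 b2 by simp
      ultimately have "jr ?E \<le> \<iota>Q (\<mu> (pCons a p))" by (rule order_trans[rotated])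
      thus ?thesis using deg lc by (simp del: nsmul_Suc)
    qed
  qed
qed

lemma one_imp_S2:
  assumes H: "\<forall>\<mu>\<in>valsV v jq. \<forall>f. f \<noteq> 0 \<longrightarrow> jr (\<eta> f) \<le> \<iota>Q (\<mu> f)"
  shows "\<forall>\<gamma>. jr eX < \<iota>Q \<gamma>"
proof
  fix \<gamma>
  obtain a where a: "a \<noteq> 0" "v a \<noteq> 0" using v_nontriv by blast
  define \<epsilon> where "\<epsilon> = max (jq (v a)) (- jq (v a))"
  have "jq (v a) \<noteq> 0" using a oe_inj[OF jq_oe, of "v a" 0] oe_0[OF jq_oe] by simp
  hence \<epsilon>pos: "0 < \<epsilon>" unfolding \<epsilon>_def
    by (cases "jq (v a)" "0::'q" rule: linorder_cases) (auto simp: max_def)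
  define \<delta> where "\<delta> = \<gamma> - \<epsilon>"
  have wg: "gval (\<lambda>x. jq (v x))" by (rule gval_comp[OF vg jq_oe])
  have "gauss (\<lambda>x. jq (v x)) \<delta> \<in> valsV v jq"
    unfolding valsV_def using gauss_gval[OF wg] gauss_const[OF wg] by (simp add: gval_poly)
  hence "jr eX \<le> \<iota>Q (gauss (\<lambda>x. jq (v x)) \<delta> [:0,1:])" using H by simp
  hence "jr eX \<le> \<iota>Q \<delta>" using gauss_X[OF wg] by simp
  also have "\<iota>Q \<delta> < \<iota>Q \<gamma>" by (rule \<iota>Q_less) (simp add: \<delta>_def \<epsilon>pos)
  finally show "jr eX < \<iota>Q \<gamma>" .
qed

lemma vg_mu: "val_group (mu_minus_inf v) = UNIV"
proof -
  have "x \<in> val_group (mu_minus_inf v)" for x :: "int \<times> 'g"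
  proof -
    obtain n g where x: "x = (n, g)" by (cases x)
    obtain c where c: "c \<noteq> 0" "v c = g" using v_onto by blast
    define f where "f = monom c (nat (-n))"
    define h where "h = monom (1::'k) (nat n)"
    have "mu_minus_inf v f - mu_minus_inf v h = x"
      using c by (simp add: mu_minus_inf_def f_def h_def degree_monom_eq gval_one[OF vg] x)
    moreover have "f \<noteq> 0" "h \<noteq> 0" using c by (auto simp: f_def h_def)
    ultimately show ?thesis unfolding val_group_def by blast
  qed
  thus ?thesis by auto
qed

lemma three_imp_K:
  assumes "val_equiv \<eta> (mu_minus_inf v)"
  shows "\<forall>k>0. \<forall>h. nsmul k eX < \<iota> h"
proof (intro allI impI)
  fix k :: nat and h assume k: "k > 0"
  obtain j where j: "bij_betw j (val_group (mu_minus_inf v)) (val_group \<eta>)"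
     "\<forall>a\<in>val_group (mu_minus_inf v). \<forall>b\<in>val_group (mu_minus_inf v). j (a + b) = j a + j b \<and> (a \<le> b \<longleftrightarrow> j a \<le> j b)"
     "\<forall>f. f \<noteq> 0 \<longrightarrow> \<eta> f = j (mu_minus_inf v f)" using assms unfolding val_equiv_def by blast
  have jle: "a \<le> b \<longleftrightarrow> j a \<le> j b" for a b using j(2) unfolding vg_mu by blast
  obtain c where c: "c \<noteq> 0" "v c = h" using v_onto by blast
  have lc1: "coeff ([:0,1::'k:]^k) k = 1"
    using lead_coeff_power[of "[:0,1::'k:]" k] degree_power_eq[of "[:0,1::'k:]" k] by simp
  have "nsmul k eX = \<eta> ([:0,1:]^k)" by (simp add: gval_power[OF \<eta>g])
  also have "\<dots> = j (- int k, 0)" using j(3) lc1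
    by (simp add: mu_minus_inf_def degree_power_eq lead_coeff_power gval_one[OF vg])
  also have "\<dots> < j (0, h)"
  proof -
    have "\<not> j (0,h) \<le> j (- int k, 0)" using jle[of "(0,h)" "(-int k,0)"] k by simp
    thus ?thesis by simp
  qed
  also have "j (0, h) = \<iota> h" using j(3)[rule_format, of "[:c:]"] c \<eta>_ext by (simp add: mu_minus_inf_def)
  finally show "nsmul k eX < \<iota> h" .
qed

end

context mset begin

definition zm :: "int \<Rightarrow> 'h" where
  "zm n = (if 0 \<le> n then nsmul (nat n) eX else - nsmul (nat (-n)) eX)"

lemma zm_diff: "zm (int a - int b) = nsmul a eX - nsmul b eX"
proof (cases "b \<le> a")
  case True
  hence 1: "int a - int b = int (a - b)" by simp
  have 2: "nsmul a eX = nsmul (a-b) eX + nsmul b eX" using nsmul_add_nat[of "a-b" b eX] True by simp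
  have "zm (int (a - b)) = nsmul (a - b) eX" unfolding zm_def by simp
  thus ?thesis unfolding 1 2 by simp
next
  case False
  hence 1: "int a - int b = - int (b - a)" and 2: "\<not> 0 \<le> int a - int b" by auto
  have 3: "nsmul b eX = nsmul (b-a) eX + nsmul a eX" using nsmul_add_nat[of "b-a" a eX] False by simp
  have 4: "nat (int b - int a) = b - a" by (simp add: nat_minus_as_int)
  have "zm (- int (b - a)) = - nsmul (b - a) eX" unfolding zm_def using False 4 by simp
  thus ?thesis unfolding 1 3 by simp
qed

lemma zm_repr: "zm n = nsmul (nat n) eX - nsmul (nat (-n)) eX"
proof -
  have e: "int (nat n) - int (nat (-n)) = n" by simp
  show ?thesis using zm_diff[of "nat n" "nat (-n)"] unfolding e .
qed

lemma zm_add: "zm (n + m) = zm n + zm m"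
proof -
  have "n + m = int (nat n + nat m) - int (nat (-n) + nat (-m))" by simp
  hence "zm (n + m) = nsmul (nat n + nat m) eX - nsmul (nat (-n) + nat (-m)) eX"
    using zm_diff by metis
  thus ?thesis by (simp add: zm_repr[of n] zm_repr[of m] nsmul_add_nat del: nsmul_Suc)
qed

definition J :: "int \<times> 'g \<Rightarrow> 'h" where "J p = \<iota> (snd p) - zm (fst p)"

lemma J_add: "J (a + b) = J a + J b"
  by (simp add: J_def oe_add[OF \<iota>_emb] zm_add)
lemma J_diff: "J (a - b) = J a - J b"
proof -
  have "J a = J (a - b) + J b" using J_add[of "a - b" b] by simp
  thus ?thesis by simp
qed

lemma J_mu:
  assumes K: "\<forall>k>0. \<forall>h. nsmul k eX < \<iota> h" and f: "f \<noteq> 0"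
  shows "J (mu_minus_inf v f) = \<eta> f"
proof -
  have "zm (- int (degree f)) = - nsmul (degree f) eX"
    using zm_diff[of 0 "degree f"] by simp
  thus ?thesis using eta_formula[OF K f] by (simp add: J_def mu_minus_inf_def)
qed

lemma J_strict:
  assumes K: "\<forall>k>0. \<forall>h. nsmul k eX < \<iota> h"
  shows "strict_mono J"
proof (rule strict_monoI)
  fix a b :: "int \<times> 'g" assume ab: "a < b"
  obtain n g m g' where a: "a = (n, g)" and b: "b = (m, g')" by (cases a, cases b)
  have "0 < J (b - a)"
  proof (cases "n < m")
    case True
    define d where "d = nat (m - n)"
    have d: "d > 0" "m - n = int d" using True by (auto simp: d_def)
    have "zm (m - n) = nsmul d eX" using d by (simp add: zm_def del: nsmul_Suc)
    moreover have "nsmul d eX < \<iota> (g' - g)" using K d by simp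
    ultimately show ?thesis by (simp add: J_def a b del: nsmul_Suc)
  next
    case False
    hence "n = m" "g < g'" using ab a b by auto
    thus ?thesis using oe_less[OF \<iota>_emb, of 0 "g' - g"] oe_0[OF \<iota>_emb]
      by (simp add: J_def a b zm_def)
  qed
  moreover have "J b = J a + J (b - a)" using J_add[of a "b - a"] by simp
  ultimately show "J a < J b" by simp
qed

lemma K_imp_three:
  assumes K: "\<forall>k>0. \<forall>h. nsmul k eX < \<iota> h"
  shows "val_equiv \<eta> (mu_minus_inf v)"
  unfolding val_equiv_def
proof (intro exI conjI)
  have sm: "strict_mono J" by (rule J_strict[OF K])
  have img: "J ` UNIV = val_group \<eta>"
  proof (intro set_eqI iffI)
    fix y assume "y \<in> J ` UNIV"
    then obtain x where y: "y = J x" by blast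
    have "x \<in> val_group (mu_minus_inf v)" using vg_mu by simp
    then obtain f h where fh: "x = mu_minus_inf v f - mu_minus_inf v h" "f \<noteq> 0" "h \<noteq> 0"
      unfolding val_group_def by blast
    have "y = \<eta> f - \<eta> h" using y fh J_diff J_mu[OF K] by simp
    thus "y \<in> val_group \<eta>" unfolding val_group_def using fh by blast
  next
    fix y assume "y \<in> val_group \<eta>"
    then obtain f h where fh: "y = \<eta> f - \<eta> h" "f \<noteq> 0" "h \<noteq> 0"
      unfolding val_group_def by blast
    have "y = J (mu_minus_inf v f - mu_minus_inf v h)" using fh J_diff J_mu[OF K] by simp
    thus "y \<in> J ` UNIV" by blast
  qed
  show "bij_betw J (val_group (mu_minus_inf v)) (val_group \<eta>)"
    unfolding vg_mu bij_betw_def using img strict_mono_imp_inj_on[OF sm] by blast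
  show "\<forall>a\<in>val_group (mu_minus_inf v). \<forall>b\<in>val_group (mu_minus_inf v). J (a + b) = J a + J b \<and> (a \<le> b \<longleftrightarrow> J a \<le> J b)"
    using J_add strict_mono_less_eq[OF sm] by simp
  show "\<forall>f. f \<noteq> 0 \<longrightarrow> \<eta> f = J (mu_minus_inf v f)" using J_mu[OF K] by simp
qed

lemma main:
  "((\<forall>\<mu>\<in>valsV v jq. \<forall>f. f \<noteq> 0 \<longrightarrow> jr (\<eta> f) \<le> \<iota>Q (\<mu> f))
            \<longleftrightarrow> (\<forall>\<gamma>. jr (\<eta> [:0, 1:]) < \<iota>Q \<gamma>))
       \<and> ((\<forall>\<gamma>. jr (\<eta> [:0, 1:]) < \<iota>Q \<gamma>) \<longleftrightarrow> val_equiv \<eta> (mu_minus_inf v))"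
proof (intro conjI iffI)
  show "\<forall>\<gamma>. jr eX < \<iota>Q \<gamma>" if "\<forall>\<mu>\<in>valsV v jq. \<forall>f. f \<noteq> 0 \<longrightarrow> jr (\<eta> f) \<le> \<iota>Q (\<mu> f)"
    using one_imp_S2 that by blast
  show "\<forall>\<mu>\<in>valsV v jq. \<forall>f. f \<noteq> 0 \<longrightarrow> jr (\<eta> f) \<le> \<iota>Q (\<mu> f)" if S2: "\<forall>\<gamma>. jr eX < \<iota>Q \<gamma>"
  proof (intro ballI allI impI)
    fix \<mu> f assume \<mu>: "\<mu> \<in> valsV v jq" and f: "(f::'k poly) \<noteq> 0"
    have K: "\<forall>k>0. \<forall>h. nsmul k eX < \<iota> h" using S2 S2_iff_K by blast
    show "jr (\<eta> f) \<le> \<iota>Q (\<mu> f)" using eta_formula[OF K f] mu_bound[OF \<mu> S2 K f] by simp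
  qed
  show "val_equiv \<eta> (mu_minus_inf v)" if S2: "\<forall>\<gamma>. jr eX < \<iota>Q \<gamma>"
    using K_imp_three S2 S2_iff_K by blast
  show "\<forall>\<gamma>. jr eX < \<iota>Q \<gamma>" if "val_equiv \<eta> (mu_minus_inf v)"
    using three_imp_K[OF that] S2_iff_K by blast
qed

end

theorem mainTheorem1:
  fixes v :: "'k::field \<Rightarrow> 'g::linordered_ab_group_add"
    and \<iota> :: "'g \<Rightarrow> 'h::linordered_ab_group_add"
    and jq :: "'g \<Rightarrow> 'q::linordered_ab_group_add"
    and jr :: "'h \<Rightarrow> 'r::linordered_ab_group_add"
    and \<iota>Q :: "'q \<Rightarrow> 'r"
    and \<eta> :: "'k poly \<Rightarrow> 'h"
  assumes v_val: "field_valuation v"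
    and v_onto: "\<forall>g. \<exists>a. a \<noteq> 0 \<and> v a = g"
    and v_nontriv: "\<exists>a. a \<noteq> 0 \<and> v a \<noteq> 0"
    and \<iota>_emb: "order_embedding \<iota>"
    and jq_hull: "divisible_hull jq"
    and jr_hull: "divisible_hull jr"
    and \<iota>Q_hom: "\<forall>a b. \<iota>Q (a + b) = \<iota>Q a + \<iota>Q b"
    and \<iota>Q_ext: "\<forall>g. \<iota>Q (jq g) = jr (\<iota> g)"
    and \<eta>_val: "poly_valuation \<eta>"
    and \<eta>_ext: "\<forall>c. c \<noteq> 0 \<longrightarrow> \<eta> [:c:] = \<iota> (v c)"
  shows "((\<forall>\<mu>\<in>valsV v jq. \<forall>f. f \<noteq> 0 \<longrightarrow> jr (\<eta> f) \<le> \<iota>Q (\<mu> f))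
            \<longleftrightarrow> (\<forall>\<gamma>. jr (\<eta> [:0, 1:]) < \<iota>Q \<gamma>))
       \<and> ((\<forall>\<gamma>. jr (\<eta> [:0, 1:]) < \<iota>Q \<gamma>) \<longleftrightarrow> val_equiv \<eta> (mu_minus_inf v))"
proof -
  interpret mset v \<iota> jq jr \<iota>Q \<eta>
    using assms by unfold_locales
  show ?thesis by (rule main)
qed

end
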